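(* Let $p$ be an odd prime and let $e$ be a positive integer. Then the largest complexity of a skew morphism of $\mathbb{Z}_{p^e}$ is $2e-1$.
   Context: $\mathbb{Z}_n$ is the cyclic group of integers modulo $n$. A skew morphism of a finite group $G$ is a permutation $\varphi$ of $G$ fixing the identity such that for each $a\in G$ there is a non-negative integer $i_a$ with $\varphi(ab)=\varphi(a)\varphi^{i_a}(b)$ for all $b\in G$. ${\rm ord}(\varphi)$ is the order of $\langle\varphi\rangle$. If $\varphi$ is non-trivial, $\pi_\varphi(a)$ is the unique such $i_a\in\{1,\dots,{\rm ord}(\varphi)-1\}$; if $\varphi$ is the identity, $\pi_\varphi(a)=1$. Let $\sigma_\varphi(x,y)=\sum_{i=0}^{x-1}\pi_\varphi(\varphi^i(y))\in\mathbb{Z}_{{\rm ord}(\varphi)}$. The derived skew morphism $\varphi'$ of a skew morphism $\varphi$ of $\mathbb{Z}_n$ is the skew morphism of $\mathbb{Z}_{{\rm ord}(\varphi)}$ given by $\varphi'(a)=\sigma_\varphi(a,1)$. Set $\varphi^{(0)}=\varphi$, $\varphi^{(i+1)}=(\varphi^{(i)})'$. For $n\ge 2$ the complexity of $\varphi$ is the unique non-negative integer $c$ such that $\varphi^{(c)}$ is a skew morphism of a non-trivial cyclic group and $\varphi^{(c+1)}$ is a skew morphism of $\mathbb{Z}_1$. *)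

theory Defs
  imports "HOL-Combinatorics.Permutations" "HOL-Computational_Algebra.Primes"
begin

text \<open>The cyclic group Z_n is represented by the carrier {0..<n} with addition mod n.
  A function on Z_n is represented as a function nat => nat that is the identity
  outside {0..<n} (so that permutations are exactly those satisfying "permutes").\<close>

definition skew_morphism :: "nat \<Rightarrow> (nat \<Rightarrow> nat) \<Rightarrow> bool" where
  "skew_morphism n \<phi> \<longleftrightarrow>
     \<phi> permutes {0..<n} \<and> \<phi> 0 = 0 \<and>
     (\<forall>a<n. \<exists>i. \<forall>b<n. \<phi> ((a + b) mod n) = (\<phi> a + (\<phi> ^^ i) b) mod n)"

definition skew_ord :: "(nat \<Rightarrow> nat) \<Rightarrow> nat" where
  "skew_ord \<phi> = (LEAST k. 0 < k \<and> \<phi> ^^ k = id)"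

definition skew_pi :: "nat \<Rightarrow> (nat \<Rightarrow> nat) \<Rightarrow> nat \<Rightarrow> nat" where
  "skew_pi n \<phi> a =
     (if \<phi> = id then 1
      else (THE i. 1 \<le> i \<and> i < skew_ord \<phi> \<and>
              (\<forall>b<n. \<phi> ((a + b) mod n) = (\<phi> a + (\<phi> ^^ i) b) mod n)))"

definition skew_sigma :: "nat \<Rightarrow> (nat \<Rightarrow> nat) \<Rightarrow> nat \<Rightarrow> nat \<Rightarrow> nat" where
  "skew_sigma n \<phi> x y = (\<Sum>i<x. skew_pi n \<phi> ((\<phi> ^^ i) y)) mod skew_ord \<phi>"

text \<open>Derived skew morphism, a function on Z_ord (identity outside {0..<ord}).
  The element 1 of Z_n is 1 mod n.\<close>
definition derived :: "nat \<Rightarrow> (nat \<Rightarrow> nat) \<Rightarrow> (nat \<Rightarrow> nat)" where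
  "derived n \<phi> = (\<lambda>a. if a < skew_ord \<phi> then skew_sigma n \<phi> a (1 mod n) else a)"

definition deriv_step :: "nat \<times> (nat \<Rightarrow> nat) \<Rightarrow> nat \<times> (nat \<Rightarrow> nat)" where
  "deriv_step x = (skew_ord (snd x), derived (fst x) (snd x))"

definition complexity :: "nat \<Rightarrow> (nat \<Rightarrow> nat) \<Rightarrow> nat" where
  "complexity n \<phi> =
     (THE c. 2 \<le> fst ((deriv_step ^^ c) (n, \<phi>)) \<and> fst ((deriv_step ^^ Suc c) (n, \<phi>)) = 1)"

end

theory Submission
  imports Defs
begin


lemma ex_ord_basic:
  assumes "k > 0" "g ^^ k = id"
  shows "skew_ord g > 0 \<and> g ^^ skew_ord g = id \<and> skew_ord g \<le> k"
proof -
  have "0 < (LEAST k. 0 < k \<and> g ^^ k = id) \<and> g ^^ (LEAST k. 0 < k \<and> g ^^ k = id) = id"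
    by (rule LeastI[of _ k]) (use assms in auto)
  moreover have "(LEAST k. 0 < k \<and> g ^^ k = id) \<le> k"
    by (rule Least_le) (use assms in auto)
  ultimately show ?thesis unfolding skew_ord_def by auto
qed

lemma permutes_funpow': "g permutes S \<Longrightarrow> (g ^^ k) permutes S"
  by (induction k) (auto simp: permutes_id intro: permutes_compose)

lemma permutes_finite_order:
  assumes "g permutes S" "finite S"
  shows "\<exists>k>0. g ^^ k = id"
proof -
  have "range (\<lambda>k. g ^^ k) \<subseteq> {p. p permutes S}"
    using assms by (auto intro: permutes_funpow')
  hence fin: "finite (range (\<lambda>k::nat. g ^^ k))"
    using finite_permutations[OF assms(2)] finite_subset by blast
  have "\<not> inj (\<lambda>k::nat. g ^^ k)"
    using fin finite_imageD infinite_UNIV_nat by blast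
  then obtain i j :: nat where ij: "i \<noteq> j" "g ^^ i = g ^^ j" unfolding inj_def by blast
  have bij: "bij (g ^^ a)" for a
    using assms(1) by (simp add: bij_fn permutes_bij)
  have main: "g ^^ (b - a) = id" if "a < b" "g ^^ a = g ^^ b" for a b
  proof -
    have "g ^^ b = g ^^ ((b - a) + a)" using that by simp
    hence "g ^^ b = g ^^ (b - a) \<circ> g ^^ a" by (simp only: funpow_add)
    hence "g ^^ (b - a) \<circ> g ^^ a = id \<circ> g ^^ a" using that by simp
    thus ?thesis using bij[of a] by (metis bij_is_surj surj_fun_eq)
  qed
  show ?thesis
  proof (cases "i < j")
    case True thus ?thesis using main[of i j] ij by (intro exI[of _ "j - i"]) auto
  next
    case False thus ?thesis using main[of j i] ij by (intro exI[of _ "i - j"]) auto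
  qed
qed

lemma id_funpow': "(id::'a\<Rightarrow>'a) ^^ q = id"
  by (induction q) auto

lemma gpow_mult_id: "g ^^ k = id \<Longrightarrow> g ^^ (k * q) = id"
  by (metis funpow_mult id_funpow')

lemma gpow_mod:
  assumes "\<exists>k>0. g ^^ k = id"
  shows "g ^^ a = g ^^ (a mod skew_ord g)"
proof -
  obtain k where k: "k > 0" "g ^^ k = id" using assms by blast
  have o: "g ^^ skew_ord g = id" using ex_ord_basic[OF k] by blast
  have "g ^^ a = g ^^ (a mod skew_ord g + skew_ord g * (a div skew_ord g))" by simp
  also have "\<dots> = g ^^ (a mod skew_ord g) \<circ> g ^^ (skew_ord g * (a div skew_ord g))"
    by (simp only: funpow_add)
  also have "\<dots> = g ^^ (a mod skew_ord g)" by (simp add: gpow_mult_id[OF o])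
  finally show ?thesis .
qed

lemma gord_dvd:
  assumes "\<exists>k>0. g ^^ k = id" "g ^^ N = id"
  shows "skew_ord g dvd N"
proof (rule ccontr)
  assume nd: "\<not> skew_ord g dvd N"
  obtain k where k: "k > 0" "g ^^ k = id" using assms by blast
  have pos: "skew_ord g > 0" using ex_ord_basic[OF k] by blast
  have "N mod skew_ord g > 0" using nd mod_eq_0_iff_dvd by auto
  moreover have "g ^^ (N mod skew_ord g) = id" using gpow_mod[OF assms(1), of N] assms(2) by simp
  ultimately have "skew_ord g \<le> N mod skew_ord g" using ex_ord_basic by blast
  thus False using pos by (meson mod_less_divisor not_le)
qed

lemma gpow_eq_iff:
  assumes "\<exists>k>0. g ^^ k = id"
  shows "g ^^ a = g ^^ b \<longleftrightarrow> a mod skew_ord g = b mod skew_ord g"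
proof
  assume "a mod skew_ord g = b mod skew_ord g"
  thus "g ^^ a = g ^^ b" using gpow_mod[OF assms] by metis
next
  assume eq: "g ^^ a = g ^^ b"
  obtain k where k: "k > 0" "g ^^ k = id" using assms by blast
  define oo where "oo = skew_ord g"
  have pos: "oo > 0" and go: "g ^^ oo = id" using ex_ord_basic[OF k] oo_def by auto
  have key: "x = y" if "x < oo" "y < oo" "x \<le> y" "g ^^ x = g ^^ y" for x y
  proof -
    have a1: "oo = x + (oo - x)" "y = (y - x) + x" using that by auto
    have "g ^^ (y - x) = g ^^ (y - x) \<circ> g ^^ oo" using go by simp
    also have "\<dots> = g ^^ (y - x) \<circ> g ^^ x \<circ> g ^^ (oo - x)"
      by (subst a1(1)) (simp only: funpow_add o_assoc)
    also have "\<dots> = g ^^ y \<circ> g ^^ (oo - x)"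
      by (subst (2) a1(2)) (simp only: funpow_add)
    also have "\<dots> = g ^^ x \<circ> g ^^ (oo - x)" using that by simp
    also have "\<dots> = g ^^ oo" by (subst (2) a1(1)) (simp only: funpow_add)
    also have "\<dots> = id" using go by simp
    finally have "g ^^ (y - x) = id" .
    show "x = y"
    proof (rule ccontr)
      assume "x \<noteq> y"
      hence "y - x > 0" using that by auto
      hence "oo \<le> y - x" using ex_ord_basic \<open>g ^^ (y - x) = id\<close> oo_def by blast
      thus False using that by auto
    qed
  qed
  have e2: "g ^^ (a mod oo) = g ^^ (b mod oo)" using eq gpow_mod[OF assms] oo_def by metis
  show "a mod skew_ord g = b mod skew_ord g"
    using key[of "a mod oo" "b mod oo"] key[of "b mod oo" "a mod oo"] e2 pos oo_def
    by (metis mod_less_divisor nat_le_linear)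
qed

lemma mod_cancel_nat:
  fixes n :: nat
  assumes "x < n" "y < n" "(A + x) mod n = (A + y) mod n"
  shows "x = y"
proof -
  have "x mod n = y mod n" using assms(3) by (simp add: nat_mod_eq_iff)
  thus ?thesis using assms by simp
qed


locale skm =
  fixes n :: nat and f :: "nat \<Rightarrow> nat"
  assumes sk: "skew_morphism n f" and npos: "0 < n"
begin

abbreviation "m \<equiv> skew_ord f"
abbreviation "P \<equiv> skew_pi n f"

lemma perm: "f permutes {0..<n}" using sk unfolding skew_morphism_def by auto
lemma f0: "f 0 = 0" using sk unfolding skew_morphism_def by auto
lemma skew_ex: "a < n \<Longrightarrow> \<exists>i. \<forall>b<n. f ((a+b) mod n) = (f a + (f^^i) b) mod n"
  using sk unfolding skew_morphism_def by auto
lemma fin_ord: "\<exists>k>0. f ^^ k = id"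
  using permutes_finite_order[OF perm] by simp
lemma m_pos: "0 < m" and f_m: "f ^^ m = id"
  using fin_ord ex_ord_basic by blast+
lemma pow_mod: "f ^^ a = f ^^ (a mod m)" using gpow_mod[OF fin_ord] .
lemma pow_eq_iff: "f ^^ a = f ^^ b \<longleftrightarrow> a mod m = b mod m" using gpow_eq_iff[OF fin_ord] .
lemma pow_perm: "(f ^^ k) permutes {0..<n}" using permutes_funpow'[OF perm] .
lemma pow_lt: "x < n \<Longrightarrow> (f ^^ k) x < n"
  using permutes_in_image[OF pow_perm] by auto
lemma f_lt: "x < n \<Longrightarrow> f x < n" using pow_lt[of x 1] by simp
lemma pow_out: "n \<le> x \<Longrightarrow> (f ^^ k) x = x"
  using pow_perm unfolding permutes_def by auto
lemma pow_0: "(f ^^ k) 0 = 0" by (induction k) (auto simp: f0)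
lemma pow_inj: "(f ^^ k) x = (f ^^ k) y \<Longrightarrow> x = y"
  using permutes_inj[OF pow_perm] by (auto simp: inj_def)
lemma pow_ext: assumes "\<forall>y<n. (f ^^ i) y = (f ^^ j) y" shows "i mod m = j mod m"
proof -
  have "f ^^ i = f ^^ j"
  proof
    fix y show "(f ^^ i) y = (f ^^ j) y"
      using assms pow_out[of y] by (cases "y < n") auto
  qed
  thus ?thesis using pow_eq_iff by simp
qed

lemma add_id_imp_id:
  assumes a: "a < n" and h: "\<forall>b<n. f ((a+b) mod n) = (f a + b) mod n"
  shows "f = id"
proof -
  have fa: "f a = a"
  proof (cases "a = 0")
    case True thus ?thesis using f0 by simp
  next
    case False
    have na: "n - a < n" using a False by auto
    have "f ((a + (n - a)) mod n) = (f a + (n - a)) mod n" using h na by blast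
    moreover have "(a + (n - a)) mod n = 0" using a by simp
    ultimately have "0 = (f a + (n - a)) mod n" using f0 by simp
    hence "(f a + (n - a)) mod n = (a + (n - a)) mod n" using a by simp
    thus ?thesis using mod_cancel_nat[of "f a" n a "n - a"] f_lt a by (metis add.commute)
  qed
  show ?thesis
  proof
    fix y show "f y = id y"
    proof (cases "y < n")
      case True
      have "(a + (y + (n - a))) mod n = y" using True a by simp
      moreover have "f ((a + (y + (n - a)) mod n) mod n) = (a + (y + (n - a)) mod n) mod n"
        using h fa npos by simp
      ultimately show ?thesis by (simp add: mod_add_right_eq)
    next
      case False thus ?thesis using pow_out[of y 1] by simp
    qed
  qed
qed

lemma m_ge2: "f \<noteq> id \<Longrightarrow> 2 \<le> m"
  using f_m m_pos by (cases "m = 1") auto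

lemma pi_unique_raw:
  assumes a: "a < n"
    and hi: "\<forall>b<n. f ((a+b) mod n) = (f a + (f^^i) b) mod n"
    and hj: "\<forall>b<n. f ((a+b) mod n) = (f a + (f^^j) b) mod n"
  shows "i mod m = j mod m"
proof (rule pow_ext, intro allI impI)
  fix y assume y: "y < n"
  have "(f a + (f^^i) y) mod n = (f a + (f^^j) y) mod n" using hi hj y by auto
  thus "(f ^^ i) y = (f ^^ j) y" using mod_cancel_nat pow_lt y by blast
qed

lemma pi_eq:
  assumes nid: "f \<noteq> id" and a: "a < n" and i: "1 \<le> i" "i < m"
    and hi: "\<forall>b<n. f ((a+b) mod n) = (f a + (f^^i) b) mod n"
  shows "P a = i"
  unfolding skew_pi_def using nid
proof (simp, intro the_equality)
  show "Suc 0 \<le> i \<and> i < m \<and> (\<forall>b<n. f ((a + b) mod n) = (f a + (f ^^ i) b) mod n)"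
    using i hi by auto
next
  fix j assume H: "Suc 0 \<le> j \<and> j < m \<and> (\<forall>b<n. f ((a + b) mod n) = (f a + (f ^^ j) b) mod n)"
  have "j mod m = i mod m" using pi_unique_raw[OF a, of j i] H hi by blast
  thus "j = i" using H i by simp
qed

lemma pi_prop:
  assumes a: "a < n" and b: "b < n"
  shows "f ((a+b) mod n) = (f a + (f^^(P a)) b) mod n"
proof (cases "f = id")
  case True thus ?thesis by (simp add: skew_pi_def)
next
  case nid: False
  obtain i where hi: "\<forall>b<n. f ((a+b) mod n) = (f a + (f^^i) b) mod n" using skew_ex[OF a] by blast
  have hi': "\<forall>b<n. f ((a+b) mod n) = (f a + (f^^(i mod m)) b) mod n"
    using hi pow_mod[of i] by simp
  have "i mod m \<noteq> 0"
  proof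
    assume "i mod m = 0"
    hence "\<forall>b<n. f ((a+b) mod n) = (f a + b) mod n" using hi' by simp
    thus False using add_id_imp_id a nid by blast
  qed
  hence "P a = i mod m" using pi_eq[OF nid a _ _ hi'] m_pos by auto
  thus ?thesis using hi' b by simp
qed

lemma pi_unique:
  assumes a: "a < n" and hi: "\<forall>b<n. f ((a+b) mod n) = (f a + (f^^i) b) mod n"
  shows "i mod m = P a mod m"
  using pi_unique_raw[OF a hi] pi_prop[OF a] by blast

lemma P0: "P 0 = 1"
proof (cases "f = id")
  case True thus ?thesis by (simp add: skew_pi_def)
next
  case False
  show ?thesis
    by (rule pi_eq[OF False npos]) (use m_ge2[OF False] f_lt f0 in auto)
qed


definition Sg :: "nat \<Rightarrow> nat \<Rightarrow> nat" where "Sg k x = (\<Sum>i<k. P ((f^^i) x))"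

lemma Sg_Suc: "Sg (Suc k) x = Sg k x + P ((f^^k) x)"
  by (simp add: Sg_def)

lemma funpow_add_apply: "(g ^^ (a + b)) y = (g ^^ a) ((g ^^ b) y)"
  by (simp add: funpow_add)

lemma iter:
  assumes x: "x < n" and y: "y < n"
  shows "(f^^k) ((x+y) mod n) = ((f^^k) x + (f^^(Sg k x)) y) mod n"
proof (induction k)
  case 0 thus ?case by (simp add: Sg_def)
next
  case (Suc k)
  have "(f^^Suc k) ((x+y) mod n) = f (((f^^k) x + (f^^(Sg k x)) y) mod n)"
    using Suc by simp
  also have "\<dots> = (f ((f^^k) x) + (f^^(P ((f^^k) x))) ((f^^(Sg k x)) y)) mod n"
    by (rule pi_prop) (use pow_lt x y in auto)
  also have "(f^^(P ((f^^k) x))) ((f^^(Sg k x)) y) = (f^^(Sg (Suc k) x)) y"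
    by (simp add: Sg_Suc funpow_add_apply[symmetric] add.commute)
  finally show ?case by simp
qed

lemma Sg_add: "Sg (a + b) x = Sg a x + Sg b ((f^^a) x)"
proof (induction b)
  case 0 thus ?case by (simp add: Sg_def)
next
  case (Suc b)
  have "(f ^^ (a + b)) x = (f ^^ b) ((f ^^ a) x)" by (metis funpow_add_apply add.commute)
  thus ?case using Suc by (simp add: Sg_Suc)
qed

lemma Sg_0: "Sg a 0 = a"
  by (simp add: Sg_def pow_0 P0)

lemma Sg_m: assumes x: "x < n" shows "Sg m x mod m = 0"
proof -
  have "Sg m x mod m = 0 mod m"
  proof (rule pow_ext, intro allI impI)
    fix y assume y: "y < n"
    have "(x + y) mod n = (x + (f^^(Sg m x)) y) mod n"
      using iter[OF x y, of m] f_m by simp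
    thus "(f ^^ Sg m x) y = (f ^^ 0) y" using mod_cancel_nat pow_lt y by (metis funpow_0)
  qed
  thus ?thesis by simp
qed

lemma Sg_mod: assumes x: "x < n" shows "Sg t x mod m = Sg (t mod m) x mod m"
proof -
  have "Sg (q * m + r) x mod m = Sg r x mod m" for q r
  proof (induction q)
    case 0 thus ?case by simp
  next
    case (Suc q)
    have "Sg (Suc q * m + r) x = Sg m x + Sg (q * m + r) x"
      using Sg_add[of m "q * m + r" x] f_m by (simp add: add.assoc)
    hence "Sg (Suc q * m + r) x mod m = (Sg m x mod m + Sg (q * m + r) x) mod m"
      by (simp add: mod_add_left_eq)
    thus ?case using Sg_m[OF x] Suc by (simp add: mod_add_right_eq)
  qed
  from this[of "t div m" "t mod m"] show ?thesis by simp
qed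

lemma cocycle:
  assumes x: "x < n" and z: "z < n"
  shows "Sg a ((x+z) mod n) mod m = Sg (Sg a x) z mod m"
proof (rule pow_ext, intro allI impI)
  fix y assume y: "y < n"
  define x' where "x' = (x + z) mod n"
  have x': "x' < n" using npos x'_def by simp
  define C where "C = (f^^a) x + (f^^(Sg a x)) z"
  have e1: "(f^^a) ((x' + y) mod n) = ((f^^a) x' + (f^^(Sg a x')) y) mod n"
    using iter[OF x' y] .
  have "(x' + y) mod n = (x + (z + y) mod n) mod n"
    unfolding x'_def by (simp add: mod_add_left_eq mod_add_right_eq add.assoc)
  hence "(f^^a) ((x' + y) mod n) = ((f^^a) x + (f^^(Sg a x)) ((z+y) mod n)) mod n"
    using iter[OF x, of "(z+y) mod n" a] npos by simp
  also have "(f^^(Sg a x)) ((z+y) mod n) = ((f^^(Sg a x)) z + (f^^(Sg (Sg a x) z)) y) mod n"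
    using iter[OF z y] .
  finally have e2: "(f^^a) ((x' + y) mod n) = (C + (f^^(Sg (Sg a x) z)) y) mod n"
    unfolding C_def by (simp add: mod_add_right_eq add.assoc)
  have e0: "(f^^a) x' = C mod n"
    using iter[OF x z, of a] unfolding x'_def C_def .
  have "(C + (f^^(Sg a x')) y) mod n = (C + (f^^(Sg (Sg a x) z)) y) mod n"
    using e1 e2 e0 by (simp add: mod_add_left_eq)
  thus "(f ^^ Sg a ((x + z) mod n)) y = (f ^^ Sg (Sg a x) z) y"
    using mod_cancel_nat pow_lt y x'_def by blast
qed

abbreviation "D \<equiv> derived n f"

lemma D_lt: "t < m \<Longrightarrow> D t = Sg t (1 mod n) mod m"
  by (simp add: derived_def skew_sigma_def Sg_def)
lemma D_out: "m \<le> t \<Longrightarrow> D t = t"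
  by (simp add: derived_def)
lemma D_range: "t < m \<Longrightarrow> D t < m"
  using D_lt m_pos by simp
lemma Dpow_lt: "t < m \<Longrightarrow> (D^^k) t < m"
  by (induction k) (auto simp: D_range)
lemma Dpow_out: "m \<le> t \<Longrightarrow> (D^^k) t = t"
  by (induction k) (auto simp: D_out)

lemma L4: "Sg a (x mod n) mod m = (D^^x) (a mod m)"
proof (induction x)
  case 0 thus ?case by (simp add: Sg_0)
next
  case (Suc x)
  have xn: "x mod n < n" "1 mod n < n" using npos by auto
  have "Suc x mod n = (x mod n + 1 mod n) mod n" by (metis Suc_eq_plus1 mod_add_eq)
  hence "Sg a (Suc x mod n) mod m = Sg (Sg a (x mod n)) (1 mod n) mod m"
    using cocycle[OF xn] by simp
  also have "\<dots> = Sg (Sg a (x mod n) mod m) (1 mod n) mod m"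
    using Sg_mod[OF xn(2)] by simp
  also have "\<dots> = D (Sg a (x mod n) mod m)"
    using D_lt m_pos by simp
  finally show ?case using Suc by simp
qed


lemma D_n: "D ^^ n = id"
proof
  fix t show "(D ^^ n) t = id t"
  proof (cases "t < m")
    case True
    have "(D ^^ n) (t mod m) = Sg t (n mod n) mod m" using L4[of t n] by simp
    thus ?thesis using True Sg_0 by simp
  next
    case False thus ?thesis using Dpow_out by simp
  qed
qed

lemma D_fin: "\<exists>k>0. D ^^ k = id" using D_n npos by blast

lemma D_perm: "D permutes {0..<m}"
proof (rule bij_imp_permutes)
  have li: "(D ^^ (n - 1)) (D t) = t" for t
  proof -
    have "(D ^^ (n - 1)) (D t) = (D ^^ (n - 1 + 1)) t" by (simp only: funpow_add_apply) simp
    also have "n - 1 + 1 = n" using npos by simp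
    finally show ?thesis using D_n by simp
  qed
  have inj: "inj_on D {0..<m}" by (metis inj_onI li)
  have "D ` {0..<m} \<subseteq> {0..<m}" using D_range by auto
  hence "D ` {0..<m} = {0..<m}" using endo_inj_surj[OF _ _ inj] by simp
  thus "bij_betw D {0..<m} {0..<m}" using inj by (simp add: bij_betw_def)
next
  fix x assume "x \<notin> {0..<m}" thus "D x = x" using D_out by simp
qed

lemma D_skew_i:
  assumes a: "a < m" and b: "b < m"
  shows "D ((a+b) mod m) = (D a + (D^^((f^^a) (1 mod n))) b) mod m"
proof -
  have one: "1 mod n < n" using npos by simp
  have "D ((a+b) mod m) = Sg ((a+b) mod m) (1 mod n) mod m" using D_lt m_pos by simp
  also have "\<dots> = Sg (a+b) (1 mod n) mod m" using Sg_mod[OF one] by simp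
  also have "\<dots> = (Sg a (1 mod n) + Sg b ((f^^a) (1 mod n))) mod m" by (simp add: Sg_add)
  also have "\<dots> = (Sg a (1 mod n) mod m + Sg b ((f^^a) (1 mod n) mod n) mod m) mod m"
    using pow_lt[OF one] by (simp add: mod_add_eq)
  also have "\<dots> = (D a + (D^^((f^^a) (1 mod n))) b) mod m"
    using L4[of b "(f^^a) (1 mod n)"] D_lt[OF a] b by simp
  finally show ?thesis .
qed

lemma D_skew: "skew_morphism m D"
  unfolding skew_morphism_def
proof (intro conjI allI impI)
  show "D permutes {0..<m}" by (rule D_perm)
  show "D 0 = 0" using D_lt[of 0] m_pos by (simp add: Sg_def)
  fix a assume "a < m"
  thus "\<exists>i. \<forall>b<m. D ((a + b) mod m) = (D a + (D ^^ i) b) mod m"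
    using D_skew_i by blast
qed

lemma ord_D_dvd: "skew_ord D dvd n"
  using gord_dvd[OF D_fin D_n] .

lemma pi_D: "x < n \<Longrightarrow> (D^^x) (1 mod m) = P x mod m"
  using L4[of 1 x] by (simp add: Sg_def)

lemma phi_sum: "x < n \<Longrightarrow> f x = (\<Sum>i<x. (f^^(P i)) (1 mod n)) mod n"
proof (induction x)
  case 0 thus ?case by (simp add: f0)
next
  case (Suc x)
  hence x: "x < n" and n2: "2 \<le> n" by auto
  have "(x + 1 mod n) mod n = Suc x" using Suc.prems n2 by simp
  hence "f (Suc x) = (f x + (f^^(P x)) (1 mod n)) mod n"
    using pi_prop[OF x, of "1 mod n"] npos by simp
  also have "\<dots> = ((\<Sum>i<x. (f^^(P i)) (1 mod n)) + (f^^(P x)) (1 mod n)) mod n"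
    using Suc.IH[OF x] by (simp add: mod_add_left_eq)
  finally show ?case by simp
qed


lemma orbit:
  assumes n2: "2 \<le> n"
  shows "m < n"
proof -
  have one: "1 mod n = 1" "(1::nat) < n" using n2 by auto
  define k where "k = (LEAST k. 0 < k \<and> (f^^k) 1 = 1)"
  have "0 < m \<and> (f^^m) 1 = 1" using m_pos f_m by simp
  hence kp: "0 < k \<and> (f^^k) 1 = 1" unfolding k_def by (rule LeastI)
  have kmin: "\<not> (0 < j \<and> (f^^j) 1 = 1)" if "j < k" for j
    using not_less_Least[OF that[unfolded k_def]] k_def by simp
  have "inj_on (\<lambda>i. (f^^i) 1) {..<k}"
  proof (rule inj_onI)
    fix i j assume i: "i \<in> {..<k}" and j: "j \<in> {..<k}" and e: "(f^^i) 1 = (f^^j) 1"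
    have gen: "a = b" if "a < k" "b < k" "a \<le> b" "(f^^a) 1 = (f^^b) 1" for a b
    proof (rule ccontr)
      assume "a \<noteq> b"
      have "(f^^b) 1 = (f^^a) ((f^^(b - a)) 1)"
        using that by (metis funpow_add_apply le_add_diff_inverse)
      hence "(f^^(b - a)) 1 = 1" using that pow_inj by metis
      moreover have "b - a < k" "0 < b - a" using that \<open>a \<noteq> b\<close> by auto
      ultimately show False using kmin[of "b - a"] by blast
    qed
    show "i = j" using gen[of i j] gen[of j i] i j e by (cases "i \<le> j") auto
  qed
  moreover have "(\<lambda>i. (f^^i) 1) ` {..<k} \<subseteq> {1..<n}"
  proof
    fix y assume "y \<in> (\<lambda>i. (f^^i) 1) ` {..<k}"
    then obtain i where y: "y = (f^^i) 1" by auto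
    have "y \<noteq> 0" using y pow_0 pow_inj by (metis zero_neq_one)
    moreover have "y < n" using y pow_lt one by simp
    ultimately show "y \<in> {1..<n}" by auto
  qed
  ultimately have "card {..<k} \<le> card {1..<n}" by (intro card_inj_on_le) auto
  hence kn: "k < n" using n2 by simp
  have fkq: "(f^^(k * q)) 1 = 1" for q
    by (induction q) (use kp in \<open>auto simp: funpow_add_apply\<close>)
  have "(f^^m) 1 = (f^^(m mod k)) ((f^^(k * (m div k))) 1)"
    by (metis funpow_add_apply mod_mult_div_eq)
  hence "(f^^(m mod k)) 1 = 1" using fkq f_m by simp
  hence "m mod k = 0" using kmin[of "m mod k"] kp by auto
  hence kdm: "k dvd m" by auto
  define j where "j = m div k"
  have mkj: "m = k * j" using kdm j_def by simp
  have jpos: "0 < j" using mkj m_pos by (cases j) auto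
  have kdvd: "k dvd Sg (k * q) 1" for q
  proof -
    define t where "t = k * q"
    define s where "s = Sg t 1"
    have st: "(f^^t) ((1 + y) mod n) = (1 + (f^^s) y) mod n" if "y < n" for y
      using iter[OF one(2) that, of t] fkq t_def s_def by simp
    have stj: "(f^^(t * i)) ((1 + y) mod n) = (1 + (f^^(s * i)) y) mod n" if "y < n" for y i
    proof (induction i)
      case 0 thus ?case by simp
    next
      case (Suc i)
      have "(f^^(t * Suc i)) ((1 + y) mod n) = (f^^t) ((f^^(t * i)) ((1 + y) mod n))"
        by (simp add: funpow_add_apply)
      also have "\<dots> = (f^^t) ((1 + (f^^(s * i)) y) mod n)" using Suc by simp
      also have "\<dots> = (1 + (f^^s) ((f^^(s * i)) y)) mod n"
        using st pow_lt that by simp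
      also have "\<dots> = (1 + (f^^(s * Suc i)) y) mod n" by (simp add: funpow_add_apply)
      finally show ?case .
    qed
    have "t * j = m * q" using t_def mkj by simp
    hence ftj: "f^^(t * j) = id" using gpow_mult_id[OF f_m] by simp
    have "(s * j) mod m = 0 mod m"
    proof (rule pow_ext, intro allI impI)
      fix y assume y: "y < n"
      have "(1 + y) mod n = (1 + (f^^(s * j)) y) mod n" using stj[OF y, of j] ftj by simp
      thus "(f ^^ (s * j)) y = (f ^^ 0) y" using mod_cancel_nat y pow_lt by (metis funpow_0)
    qed
    hence "k * j dvd s * j" using mkj by auto
    hence "k dvd s" using jpos by simp
    thus ?thesis using s_def t_def by simp
  qed
  have Dk: "k dvd D t" if tt: "t < m" "k dvd t" for t
  proof -
    obtain q where "t = k * q" using tt by auto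
    hence "k dvd Sg t 1" using kdvd by simp
    thus ?thesis using D_lt[OF tt(1)] one kdm by (simp add: dvd_mod)
  qed
  have Dpk: "k dvd (D^^x) (k mod m)" for x
  proof (induction x)
    case 0 thus ?case using kdm by (simp add: dvd_mod)
  next
    case (Suc x)
    thus ?case using Dk Dpow_lt m_pos by simp
  qed
  have fk: "(f^^k) x = x" if "x < n" for x
    using that
  proof (induction x)
    case 0 thus ?case by (simp add: pow_0)
  next
    case (Suc x)
    hence x: "x < n" by simp
    have "(f^^k) (Suc x) = (f^^k) ((x + 1) mod n)" using Suc.prems by simp
    also have "\<dots> = ((f^^k) x + (f^^(Sg k x)) 1) mod n" using iter[OF x one(2)] by simp
    also have "(f^^(Sg k x)) 1 = 1"
    proof -
      have "Sg k x mod m = (D^^x) (k mod m)" using L4[of k x] x by simp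
      then obtain c where c: "Sg k x mod m = k * c" using Dpk by (metis dvdE)
      have "(f^^(Sg k x)) 1 = (f^^(k * c)) 1" using pow_mod[of "Sg k x"] c by simp
      thus ?thesis using fkq by simp
    qed
    finally show ?case using Suc by simp
  qed
  have "f^^k = id"
  proof
    fix x show "(f^^k) x = id x" using fk pow_out[of x] by (cases "x < n") auto
  qed
  hence "m \<le> k" using ex_ord_basic kp by blast
  thus ?thesis using kn by simp
qed

end


lemma (in skm) second_derived:
  assumes x: "x < skew_ord D"
  shows "derived m D x = f x mod skew_ord D"
proof -
  interpret E: skm m D by unfold_locales (rule D_skew, rule m_pos)
  define n2 where "n2 = skew_ord D"
  have n2d: "n2 dvd n" using ord_D_dvd n2_def by simp
  have n2p: "0 < n2" using E.m_pos n2_def by simp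
  have n2n: "n2 \<le> n" using n2d npos by (simp add: dvd_imp_le)
  have xn: "x < n" using x n2n n2_def by simp
  have trm: "E.P ((D^^i) (1 mod m)) mod n2 = (f^^(P i)) (1 mod n) mod n2" if i: "i < x" for i
  proof -
    define t where "t = P i mod m"
    have "(D^^i) (1 mod m) = t" using pi_D[of i] i xn t_def by simp
    moreover have tm: "t < m" using t_def m_pos by simp
    moreover have "(f^^t) (1 mod n) mod n2 = E.P t mod n2"
      using E.pi_unique[OF tm, of "(f^^t) (1 mod n)"] D_skew_i[OF tm] n2_def by simp
    moreover have "f^^t = f^^(P i)" using pow_mod t_def by simp
    ultimately show ?thesis by simp
  qed
  have "derived m D x = E.Sg x (1 mod m) mod n2" using E.D_lt x n2_def by simp
  also have "\<dots> = (\<Sum>i<x. E.P ((D^^i) (1 mod m)) mod n2) mod n2"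
    unfolding E.Sg_def by (simp add: mod_sum_eq)
  also have "\<dots> = (\<Sum>i<x. (f^^(P i)) (1 mod n) mod n2) mod n2"
    using trm by simp
  also have "\<dots> = (\<Sum>i<x. (f^^(P i)) (1 mod n)) mod n2"
    by (simp add: mod_sum_eq)
  also have "\<dots> = f x mod n2"
    using phi_sum[OF xn] n2d by (simp add: mod_mod_cancel)
  finally show ?thesis using n2_def by simp
qed



definition sb :: "nat \<Rightarrow> nat" where "sb p = (p - 1)^2"
definition sS :: "nat \<Rightarrow> nat \<Rightarrow> nat" where "sS p x = (\<Sum>k<x. (sb p)^k)"

lemma gauss_lt: "2 * (\<Sum>i<q. i) + q = q * (q::nat)"
  by (induction q) (simp_all add: algebra_simps)

lemma mod_mult_cancel_coprime:
  fixes a x y n :: nat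
  assumes c: "coprime a n" and h: "(a * x) mod n = (a * y) mod n"
  shows "x mod n = y mod n"
proof -
  have "int (a * x) mod int n = int (a * y) mod int n" using h by (metis of_nat_mod)
  hence "int n dvd int a * (int x - int y)" by (simp add: mod_eq_dvd_iff algebra_simps)
  moreover have "coprime (int n) (int a)" using c by (simp add: coprime_commute)
  ultimately have "int n dvd int x - int y" using coprime_dvd_mult_right_iff by blast
  hence "int x mod int n = int y mod int n" by (simp add: mod_eq_dvd_iff)
  thus ?thesis by (metis of_nat_mod of_nat_eq_iff)
qed

lemma add_mod_cancel0:
  fixes A B n :: nat
  assumes h: "(A + B) mod n = A mod n"
  shows "n dvd B"
proof -
  have "int (A + B) mod int n = int A mod int n" using h by (metis of_nat_mod)
  hence "int n dvd int (A + B) - int A" by (simp add: mod_eq_dvd_iff)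
  thus ?thesis by simp
qed

locale oddp =
  fixes p :: nat
  assumes pp: "prime p" and po: "odd p"
begin

abbreviation "S \<equiv> sS p"
abbreviation "s \<equiv> sb p"

lemma p3: "3 \<le> p"
proof -
  have "2 \<le> p" using pp prime_ge_2_nat by blast
  moreover have "p \<noteq> 2" using po by auto
  ultimately show ?thesis by simp
qed

lemma s_eq: "s = 1 + p * (p - 2)"
proof -
  obtain q where q: "p = q + 2" using p3 by (intro that[of "p - 2"]) simp
  show ?thesis unfolding q sb_def by (simp add: power2_eq_square algebra_simps)
qed

lemma S_Suc: "S (Suc k) = S k + s^k" by (simp add: sS_def)

lemma S_add: "S (a + b) = S a + s^a * S b"
  by (induction b) (simp_all add: sS_def power_add algebra_simps)

lemma pow_S: "s^k = 1 + p * (p - 2) * S k"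
proof (induction k)
  case 0 thus ?case by (simp add: sS_def)
next
  case (Suc k)
  have "s^Suc k = s * s^k" by simp
  also have "\<dots> = (1 + p * (p - 2)) * s^k" by (simp only: s_eq)
  also have "\<dots> = s^k + p * (p - 2) * s^k" by (simp add: algebra_simps)
  also have "\<dots> = 1 + p * (p - 2) * S (Suc k)"
    using Suc by (simp add: S_Suc algebra_simps)
  finally show ?case .
qed

lemma one_plus_mod: "(1 + p * X) mod p = 1"
proof -
  have "(1 + p * X) mod p = 1 mod p" by (metis mod_mult_self2 mult.commute)
  thus ?thesis using p3 by simp
qed

lemma spow_mod_p: "s^k mod p = 1"
  using pow_S[of k] one_plus_mod[of "(p - 2) * S k"] by (simp add: mult.assoc)

lemma S_mod_p: "S k mod p = k mod p"
proof (induction k)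
  case 0 thus ?case by (simp add: sS_def)
next
  case (Suc k)
  have "S (Suc k) mod p = (S k mod p + s^k mod p) mod p"
    by (simp add: S_Suc mod_add_eq)
  also have "\<dots> = (k mod p + 1) mod p" using Suc spow_mod_p by simp
  also have "\<dots> = Suc k mod p" by (simp add: mod_Suc_eq)
  finally show ?case .
qed

lemma S_mult: "S (k * q) = S k * (\<Sum>i<q. s^(k * i))"
proof (induction q)
  case 0 thus ?case by (simp add: sS_def)
next
  case (Suc q)
  have "S (k * Suc q) = S (k * q + k)" by (simp add: algebra_simps)
  also have "\<dots> = S (k * q) + s^(k * q) * S k" by (rule S_add)
  also have "\<dots> = S k * (\<Sum>i<Suc q. s^(k * i))" using Suc by (simp add: algebra_simps)
  finally show ?case .
qed

lemma binom_mod: "(1 + p * w)^i mod p^2 = (1 + i * p * w) mod p^2"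
proof (induction i)
  case 0 thus ?case by simp
next
  case (Suc i)
  have "(1 + p * w)^Suc i mod p^2 = ((1 + p * w)^i * (1 + p * w)) mod p^2"
    by (simp only: power_Suc2)
  also have "\<dots> = (((1 + p * w)^i mod p^2) * (1 + p * w)) mod p^2"
    by (simp only: mod_mult_left_eq)
  also have "\<dots> = (((1 + i * p * w) mod p^2) * (1 + p * w)) mod p^2"
    by (simp only: Suc.IH)
  also have "\<dots> = ((1 + i * p * w) * (1 + p * w)) mod p^2"
    by (simp only: mod_mult_left_eq)
  also have "(1 + i * p * w) * (1 + p * w) = (1 + Suc i * p * w) + p^2 * (i * w * w)"
    by (simp add: power2_eq_square algebra_simps)
  also have "((1 + Suc i * p * w) + p^2 * (i * w * w)) mod p^2 = (1 + Suc i * p * w) mod p^2"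
    by simp
  finally show ?case .
qed

lemma T_mod: "(\<Sum>i<p. s^(k * i)) mod p^2 = p"
proof -
  define w where "w = (p - 2) * S k"
  have sk: "s^k = 1 + p * w" using pow_S w_def by (simp add: algebra_simps)
  have "(\<Sum>i<p. s^(k * i)) = (\<Sum>i<p. (1 + p * w)^i)"
    by (simp add: power_mult sk)
  hence "(\<Sum>i<p. s^(k * i)) mod p^2 = (\<Sum>i<p. (1 + p * w)^i mod p^2) mod p^2"
    by (simp add: mod_sum_eq)
  also have "\<dots> = (\<Sum>i<p. (1 + i * p * w) mod p^2) mod p^2" by (simp only: binom_mod)
  also have "\<dots> = (\<Sum>i<p. (1 + i * p * w)) mod p^2" by (simp only: mod_sum_eq)
  also have "(\<Sum>i<p. (1 + i * p * w)) = p + p * w * (\<Sum>i<p. i)"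
  proof -
    have "(\<Sum>i<p. (1 + i * p * w)) = (\<Sum>i<p. 1) + (\<Sum>i<p. i * (p * w))"
      by (simp only: sum.distrib mult.assoc)
    also have "(\<Sum>i<p. i * (p * w)) = (\<Sum>i<p. i) * (p * w)" by (rule sum_distrib_right[symmetric])
    finally show ?thesis by (simp add: algebra_simps)
  qed
  also have "(\<Sum>i<p. i) = p * ((p - 1) div 2)"
  proof -
    have g: "2 * (\<Sum>i<p. i) + p = p * p" by (rule gauss_lt)
    obtain t where t: "p = 2 * t + 1" using po oddE by blast
    have "2 * (\<Sum>i<p. i) = 2 * (p * t)" using g t by (simp add: algebra_simps)
    hence "(\<Sum>i<p. i) = p * t" by simp
    moreover have "(p - 1) div 2 = t" using t by simp
    ultimately show ?thesis by simp
  qed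
  also have "p + p * w * (p * ((p - 1) div 2)) = p + p^2 * (w * ((p - 1) div 2))"
    by (simp add: power2_eq_square algebra_simps)
  also have "(p + p^2 * (w * ((p - 1) div 2))) mod p^2 = p mod p^2" by simp
  also have "p mod p^2 = p" using p3 by (simp add: power2_eq_square)
  finally show ?thesis .
qed

lemma T_dvd: "p dvd (\<Sum>i<p. s^(k * i))"
proof -
  have "(\<Sum>i<p. s^(k * i)) mod p^2 mod p = 0" using T_mod by simp
  thus ?thesis by (simp add: mod_mod_cancel power2_eq_square dvd_eq_mod_eq_0)
qed

lemma T_ndvd: "\<not> p^2 dvd (\<Sum>i<p. s^(k * i))"
  using T_mod[of k] p3 by (simp add: dvd_eq_mod_eq_0)

lemma S_ppow: "p^j dvd S (p^j)"
proof (induction j)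
  case 0 thus ?case by simp
next
  case (Suc j)
  have "S (p^Suc j) = S (p^j) * (\<Sum>i<p. s^(p^j * i))"
    using S_mult[of "p^j" p] by (simp add: mult.commute)
  thus ?case using mult_dvd_mono[OF Suc.IH T_dvd[of "p^j"]] by (simp add: mult.commute)
qed

lemma S_ppow_mult: "p^j dvd S (p^j * q)"
  using S_mult[of "p^j" q] S_ppow by simp

lemma S_dvd_imp: "p^j dvd S k \<Longrightarrow> p^j dvd k"
proof (induction j arbitrary: k)
  case 0 thus ?case by simp
next
  case (Suc j)
  have "p dvd p^Suc j" by simp
  hence "p dvd S k" using Suc.prems by (rule dvd_trans)
  hence "k mod p = 0" using S_mod_p[of k] by simp
  hence "p dvd k" by auto
  then obtain k' where "k = p * k'" by (elim dvdE)
  hence k: "k = k' * p" by (simp add: mult.commute)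
  define T where "T = (\<Sum>i<p. s^(k' * i))"
  have Sk: "S k = S k' * T" using S_mult[of k' p] k T_def by simp
  obtain u where u: "T = p * u" using T_dvd[of k'] unfolding T_def by (elim dvdE)
  have nu: "\<not> p dvd u"
  proof
    assume "p dvd u"
    hence "p^2 dvd T" using u by (simp add: power2_eq_square)
    thus False using T_ndvd T_def by simp
  qed
  have "p^j * p dvd (S k' * u) * p" using Suc.prems Sk u by (simp add: algebra_simps)
  hence "p^j dvd S k' * u" using p3 by simp
  moreover have "coprime (p^j) u" using nu pp by (simp add: prime_imp_coprime coprime_power_left_iff)
  ultimately have "p^j dvd S k'" using coprime_dvd_mult_left_iff by blast
  hence "p^j dvd k'" using Suc.IH by blast
  thus ?case using k by simp
qed

lemma S_mod_ppow: "S (x mod p^j) mod p^j = S x mod p^j"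
proof -
  have "S x = S (x mod p^j + p^j * (x div p^j))" by simp
  also have "\<dots> = S (x mod p^j) + s^(x mod p^j) * S (p^j * (x div p^j))" by (rule S_add)
  finally have "S x mod p^j = (S (x mod p^j) + s^(x mod p^j) * S (p^j * (x div p^j))) mod p^j" by simp
  also have "\<dots> = S (x mod p^j) mod p^j"
  proof -
    obtain c where c: "S (p^j * (x div p^j)) = p^j * c" using S_ppow_mult[of j "x div p^j"] by (elim dvdE)
    have "s^(x mod p^j) * S (p^j * (x div p^j)) = (s^(x mod p^j) * c) * p^j" using c by simp
    thus ?thesis by (simp only: mod_mult_self1)
  qed
  finally show ?thesis by simp
qed

lemma r_coprime: "coprime ((p - 1)^k) (p^j)"
proof -
  have "coprime (p - 1) (Suc (p - 1))" by simp
  moreover have "Suc (p - 1) = p" using p3 by simp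
  ultimately have "coprime (p - 1) p" by simp
  thus ?thesis by simp
qed

lemma s_coprime: "coprime (s^k) (p^j)"
  using r_coprime[of "2 * k" j] unfolding sb_def by (simp add: power_mult)

lemma r2_coprime: "coprime (p - 2) (p^j)"
proof -
  have "\<not> p dvd (p - 2)"
  proof
    assume "p dvd p - 2"
    moreover have "0 < p - 2" using p3 by simp
    ultimately have "p \<le> p - 2" by (rule dvd_imp_le)
    thus False using p3 by simp
  qed
  hence "coprime p (p - 2)" using pp by (simp add: prime_imp_coprime)
  thus ?thesis by (simp add: coprime_commute)
qed

lemma s_ppow: assumes e: "1 \<le> e" shows "s^(p^(e - 1)) mod p^e = 1"
proof -
  have "p^(e-1) dvd S (p^(e-1))" by (rule S_ppow)
  then obtain c where c: "S (p^(e-1)) = p^(e-1) * c" by (elim dvdE)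
  have pe: "p^e = p * p^(e-1)" using e by (cases e) auto
  have "s^(p^(e - 1)) = 1 + p^e * ((p - 2) * c)" using pow_S[of "p^(e-1)"] c pe by (simp add: algebra_simps)
  moreover have "1 < p^e" using p3 e by (intro one_less_power) auto
  moreover have "(1 + p^e * ((p - 2) * c)) mod p^e = 1 mod p^e" by (metis mod_mult_self2 mult.commute)
  ultimately show ?thesis using e p3 by simp
qed

lemma S_inj: assumes "x < p^e" "y < p^e" "S x mod p^e = S y mod p^e" shows "x = y"
proof -
  have gen: "a = b" if ab: "a \<le> b" "b < p^e" "S a mod p^e = S b mod p^e" for a b
  proof -
    define d where "d = b - a"
    have "S b = S a + s^a * S d" using S_add[of a d] d_def ab by simp
    hence "(S a + s^a * S d) mod p^e = S a mod p^e" using ab by simp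
    hence "p^e dvd s^a * S d" by (rule add_mod_cancel0)
    moreover have "coprime (p^e) (s^a)" using s_coprime by (simp add: coprime_commute)
    ultimately have "p^e dvd S d" using coprime_dvd_mult_right_iff by blast
    hence pd: "p^e dvd d" by (rule S_dvd_imp)
    have dl: "d < p^e" using d_def ab by simp
    have "d = 0"
    proof (rule ccontr)
      assume "d \<noteq> 0"
      hence "p^e \<le> d" using pd by (simp add: dvd_imp_le)
      thus False using dl by simp
    qed
    thus ?thesis using d_def ab by simp
  qed
  show ?thesis using gen[of x y] gen[of y x] assms by (cases "x \<le> y") auto
qed

lemma S_surj: "\<exists>y<p^e. S y mod p^e = z mod p^e"
proof -
  have pe: "0 < p^e" using p3 by simp
  let ?g = "\<lambda>y. S y mod p^e"
  have "inj_on ?g {..<p^e}" using S_inj by (intro inj_onI) auto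
  moreover have "?g ` {..<p^e} \<subseteq> {..<p^e}" using pe by auto
  ultimately have "?g ` {..<p^e} = {..<p^e}" by (intro endo_inj_surj) auto
  moreover have "z mod p^e \<in> {..<p^e}" using pe by simp
  ultimately have "z mod p^e \<in> ?g ` {..<p^e}" by simp
  then obtain y where "y < p^e" "z mod p^e = S y mod p^e" by auto
  thus ?thesis by auto
qed

end


definition fam :: "nat \<Rightarrow> nat \<Rightarrow> nat \<Rightarrow> nat" where
  "fam p e x = (if x < p^e then (THE y. y < p^e \<and> sS p y mod p^e = ((p - 1) * sS p x) mod p^e) else x)"

context oddp
begin

abbreviation "r \<equiv> p - 1"

lemma s_r: "s = r^2" by (simp add: sb_def)

lemma fam_prop:
  assumes x: "x < p^e"
  shows "fam p e x < p^e \<and> S (fam p e x) mod p^e = (r * S x) mod p^e"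
proof -
  obtain y where y: "y < p^e" "S y mod p^e = (r * S x) mod p^e" using S_surj[of e "r * S x"] by blast
  have "(THE y. y < p^e \<and> S y mod p^e = (r * S x) mod p^e) = y"
  proof (rule the_equality)
    show "y < p^e \<and> S y mod p^e = (r * S x) mod p^e" using y by simp
  next
    fix y' assume "y' < p^e \<and> S y' mod p^e = (r * S x) mod p^e"
    thus "y' = y" using y S_inj by metis
  qed
  hence "fam p e x = y" using x by (simp add: fam_def)
  thus ?thesis using y by simp
qed

lemma fam_lt: "x < p^e \<Longrightarrow> fam p e x < p^e" using fam_prop by blast
lemma fam_S: "x < p^e \<Longrightarrow> S (fam p e x) mod p^e = (r * S x) mod p^e" using fam_prop by blast
lemma fam_out: "p^e \<le> x \<Longrightarrow> fam p e x = x" by (simp add: fam_def)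

lemma fam_uniq:
  assumes "x < p^e" "y < p^e" "S y mod p^e = (r * S x) mod p^e"
  shows "fam p e x = y"
  using fam_prop[OF assms(1)] assms S_inj by metis

lemma fampow_lt: "z < p^e \<Longrightarrow> (fam p e ^^ k) z < p^e"
  by (induction k) (auto simp: fam_lt)

lemma fam_pow:
  assumes z: "z < p^e"
  shows "S ((fam p e ^^ k) z) mod p^e = (r^k * S z) mod p^e"
proof (induction k)
  case 0 thus ?case by simp
next
  case (Suc k)
  have "S ((fam p e ^^ Suc k) z) mod p^e = (r * S ((fam p e ^^ k) z)) mod p^e"
    using fam_S fampow_lt[OF z] by simp
  also have "\<dots> = (r * (r^k * S z)) mod p^e"
    using Suc by (metis mod_mult_right_eq)
  finally show ?case by (simp add: mult.assoc)
qed

lemma fam_0: "fam p e 0 = 0"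
  using fam_uniq[of 0 e 0] p3 by (simp add: sS_def)

lemma fam_inj:
  assumes "x < p^e" "y < p^e" "fam p e x = fam p e y"
  shows "x = y"
proof -
  have "S x mod p^e = S y mod p^e"
  proof -
  have "(r * S x) mod p^e = (r * S y) mod p^e" using fam_S[of x e] fam_S[of y e] assms by simp
  moreover have "coprime r (p^e)" using r_coprime[of 1 e] by simp
  ultimately show "S x mod p^e = S y mod p^e" by (rule mod_mult_cancel_coprime[rotated])
  qed
  thus ?thesis using S_inj assms by blast
qed

lemma fam_perm: "fam p e permutes {0..<p^e}"
proof (rule bij_imp_permutes)
  have inj: "inj_on (fam p e) {0..<p^e}" using fam_inj by (intro inj_onI) auto
  have "fam p e ` {0..<p^e} \<subseteq> {0..<p^e}" using fam_lt by auto
  hence "fam p e ` {0..<p^e} = {0..<p^e}" using endo_inj_surj[OF _ _ inj] by simp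
  thus "bij_betw (fam p e) {0..<p^e} {0..<p^e}" using inj by (simp add: bij_betw_def)
next
  fix x assume "x \<notin> {0..<p^e}" thus "fam p e x = x" using fam_out by simp
qed

lemma sK_pow: assumes e: "1 \<le> e" shows "(s^(p^(e-1)))^F mod p^e = 1"
proof -
  have "(s^(p^(e-1)))^F mod p^e = ((s^(p^(e-1))) mod p^e)^F mod p^e" by (simp add: power_mod)
  also have "\<dots> = 1 mod p^e" using s_ppow[OF e] by simp
  also have "\<dots> = 1" using e p3 by (simp add: one_less_power)
  finally show ?thesis .
qed

lemma key_exp:
  assumes e: "1 \<le> e"
  shows "(s^F * r^(1 + 2*a + (2*p^(e-1) - 2) * F)) mod p^e = (r * s^a) mod p^e"
proof -
  define K where "K = p^(e-1)"
  have K1: "1 \<le> K" using p3 K_def by simp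
  then obtain K' where K': "K = Suc K'" by (cases K) auto
  define Y where "Y = 1 + 2*a + (2*K - 2) * F"
  have ex: "2*F + Y = 1 + 2*a + 2*K*F" using K' Y_def by (simp add: algebra_simps)
  have p1: "s^F = r^(2*F)" by (simp add: s_r power_mult)
  have p2: "r^(1 + 2*a + 2*K*F) = r * r^(2*a) * r^(2*K*F)" by (simp add: power_add)
  have p3': "r^(2*a) = s^a" by (simp add: s_r power_mult)
  have p4: "r^(2*K*F) = (s^K)^F" by (simp add: s_r power_mult)
  have "s^F * r^Y = r^(2*F + Y)" using p1 by (simp add: power_add)
  also have "\<dots> = r * s^a * (s^K)^F" using ex p2 p3' p4 by simp
  finally have eq0: "s^F * r^Y = r * s^a * (s^K)^F" .
  hence eq: "s^F * r^(1 + 2*a + (2*K - 2) * F) = r * s^a * (s^K)^F" using Y_def by simp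
  have "(s^F * r^(1 + 2*a + (2*K - 2) * F)) mod p^e = (r * s^a * (s^K)^F) mod p^e" by (simp only: eq)
  also have "\<dots> = (r * s^a * ((s^K)^F mod p^e)) mod p^e" by (simp only: mod_mult_right_eq)
  also have "\<dots> = (r * s^a) mod p^e" using sK_pow[OF e] K_def by simp
  finally show ?thesis unfolding K_def .
qed

lemma S_1: "S 1 = 1" by (simp add: sS_def)

lemma fam_skew_i:
  assumes e: "1 \<le> e" and a: "a < p^e" and b: "b < p^e"
  shows "fam p e ((a+b) mod p^e) = (fam p e a + (fam p e ^^ (1 + 2*a + (2*p^(e-1) - 2) * fam p e a)) b) mod p^e"
proof -
  define N where "N = p^e"
  define F where "F = fam p e a"
  define i where "i = 1 + 2*a + (2*p^(e-1) - 2) * F"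
  define B where "B = (fam p e ^^ i) b"
  have Npos: "0 < N" using p3 N_def by simp
  have SF: "S F mod N = (r * S a) mod N" using fam_S[OF a] F_def N_def by simp
  have SB: "S B mod N = (r^i * S b) mod N" using fam_pow[OF b] B_def N_def by simp
  have key: "(s^F * r^i) mod N = (r * s^a) mod N" using key_exp[OF e] i_def N_def by simp
  have "S ((F + B) mod N) mod N = S (F + B) mod N" using S_mod_ppow N_def by simp
  also have "\<dots> = (S F + s^F * S B) mod N" by (simp add: S_add)
  also have "\<dots> = (r * S a + s^F * (r^i * S b)) mod N"
    by (rule mod_add_cong[OF SF mod_mult_cong[OF refl SB]])
  also have "\<dots> = (r * S a + (s^F * r^i) * S b) mod N" by (simp add: mult.assoc)
  also have "\<dots> = (r * S a + (r * s^a) * S b) mod N"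
    by (rule mod_add_cong[OF refl mod_mult_cong[OF key refl]])
  also have "\<dots> = (r * S (a + b)) mod N" by (simp add: S_add algebra_simps)
  also have "\<dots> = (r * S ((a + b) mod N)) mod N"
    by (rule mod_mult_cong[OF refl]) (simp add: S_mod_ppow N_def)
  finally have "S ((F + B) mod N) mod N = (r * S ((a + b) mod N)) mod N" .
  hence "fam p e ((a+b) mod N) = (F + B) mod N"
    using fam_uniq[of "(a+b) mod N" e "(F + B) mod N"] Npos N_def by simp
  thus ?thesis using N_def F_def i_def B_def by simp
qed

lemma fam_skew: assumes e: "1 \<le> e" shows "skew_morphism (p^e) (fam p e)"
  unfolding skew_morphism_def
proof (intro conjI allI impI)
  show "fam p e permutes {0..<p^e}" by (rule fam_perm)
  show "fam p e 0 = 0" by (rule fam_0)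
  fix a assume "a < p^e"
  thus "\<exists>i. \<forall>b<p^e. fam p e ((a + b) mod p^e) = (fam p e a + (fam p e ^^ i) b) mod p^e"
    using fam_skew_i[OF e] by blast
qed

lemma fam_compat:
  assumes x: "x < p^e"
  shows "fam p e x = fam p (Suc e) x mod p^e"
proof -
  have dv: "p^e dvd p^Suc e" by simp
  have "p^e \<le> p^Suc e" using p3 by simp
  have x': "x < p^Suc e" using x \<open>p^e \<le> p^Suc e\<close> by (rule less_le_trans)
  have "S (fam p (Suc e) x mod p^e) mod p^e = S (fam p (Suc e) x) mod p^e" by (rule S_mod_ppow)
  also have "\<dots> = S (fam p (Suc e) x) mod p^Suc e mod p^e" using dv by (simp add: mod_mod_cancel)
  also have "\<dots> = (r * S x) mod p^Suc e mod p^e" using fam_S[OF x'] by simp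
  also have "\<dots> = (r * S x) mod p^e" using dv by (simp add: mod_mod_cancel)
  finally show ?thesis using fam_uniq[OF x, of "fam p (Suc e) x mod p^e"] p3 by simp
qed

lemma fam_nonid: assumes e: "1 \<le> e" shows "fam p e 1 \<noteq> 1"
proof
  assume h: "fam p e 1 = 1"
  have pe: "p \<le> p^e" using e p3 by (simp add: self_le_power)
  have "1 < p^e" using pe p3 by simp
  hence "S (fam p e 1) mod p^e = (r * S 1) mod p^e" using fam_S by simp
  hence eq1: "1 mod p^e = r mod p^e" using h S_1 by (simp only: mult_1_right)
  have rl: "r < p^e" using pe p3 by simp
  have one: "1 < p^e" using pe p3 by simp
  have "(1::nat) = 1 mod p^e" by (rule mod_less[OF one, symmetric])
  also have "\<dots> = r mod p^e" by (rule eq1)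
  also have "\<dots> = r" using rl by simp
  finally have "1 = r" .
  thus False using p3 by simp
qed

lemma spow_inj:
  assumes e: "1 \<le> e" and h: "s^u mod p^e = s^v mod p^e"
  shows "u mod p^(e-1) = v mod p^(e-1)"
proof -
  have gen: "x mod p^(e-1) = y mod p^(e-1)" if xy: "x \<le> y" "s^x mod p^e = s^y mod p^e" for x y
  proof -
    define d where "d = y - x"
    have yd: "y = x + d" using xy d_def by simp
    have "s^y = s^x * s^d" unfolding yd by (rule power_add)
    hence m1: "(s^x * s^d) mod p^e = (s^x * 1) mod p^e" using xy(2) by simp
    have c: "coprime (s^x) (p^e)" by (rule s_coprime)
    have "s^d mod p^e = 1 mod p^e" by (rule mod_mult_cancel_coprime[OF c m1])
    hence "(1 + p * (p - 2) * S d) mod p^e = 1 mod p^e" by (simp only: pow_S)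
    hence "p^e dvd p * (p - 2) * S d" by (rule add_mod_cancel0)
    hence d1: "p^e dvd p * ((p - 2) * S d)" by (simp only: mult.assoc)
    have pe: "p^e = p * p^(e-1)" using e by (cases e) auto
    have "p * p^(e-1) dvd p * ((p - 2) * S d)" using d1 unfolding pe .
    moreover have "0 < p" using p3 by simp
    ultimately have "p^(e-1) dvd (p - 2) * S d" by simp
    moreover have "coprime (p^(e-1)) (p - 2)" using r2_coprime[of "e-1"] by (simp add: coprime_commute)
    ultimately have "p^(e-1) dvd S d" using coprime_dvd_mult_right_iff by blast
    hence "p^(e-1) dvd d" by (rule S_dvd_imp)
    then obtain c where c: "d = p^(e-1) * c" by (elim dvdE)
    have "y = x + p^(e-1) * c" using c d_def xy by simp
    thus ?thesis by simp
  qed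
  show ?thesis
  proof (cases "u \<le> v")
    case True thus ?thesis using gen[of u v] h by blast
  next
    case False
    hence "v \<le> u" by simp
    thus ?thesis using gen[of v u] h by simp
  qed
qed

lemma fam_nonadd:
  assumes e: "2 \<le> e"
  shows "\<not> (\<forall>b<p^e. fam p e ((p^(e-2) + b) mod p^e) = (fam p e (p^(e-2)) + fam p e b) mod p^e)"
proof
  assume H: "\<forall>b<p^e. fam p e ((p^(e-2) + b) mod p^e) = (fam p e (p^(e-2)) + fam p e b) mod p^e"
  define N where "N = p^e"
  define K where "K = p^(e-1)"
  define a where "a = p^(e-2)"
  define F where "F = fam p e a"
  define i where "i = 1 + 2*a + (2*p^(e-1) - 2) * F"
  have e1: "1 \<le> e" using e by simp
  have ee: "e - 2 < e - 1" "e - 1 < e" using e by auto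
  have aK: "a < K" unfolding a_def K_def by (rule power_strict_increasing[OF ee(1)]) (use p3 in auto)
  have KN: "K < N" unfolding K_def N_def by (rule power_strict_increasing[OF ee(2)]) (use p3 in auto)
  have aN: "a < N" using aK KN by simp
  have Kd: "K dvd N" using K_def N_def e by (simp add: le_imp_power_dvd)
  have one: "1 < N" using KN aK by simp
  have sk1: "fam p e ((a+1) mod N) = (F + (fam p e ^^ i) 1) mod N"
    unfolding N_def F_def i_def by (rule fam_skew_i[OF e1]) (use aN one in \<open>simp_all add: N_def\<close>)
  have h1: "fam p e ((a + 1) mod N) = (F + fam p e 1) mod N"
    using one unfolding N_def F_def a_def by (rule H[rule_format])
  have lt1: "(fam p e ^^ i) 1 < N" "fam p e 1 < N" using one N_def fampow_lt fam_lt by auto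
  have "(F + (fam p e ^^ i) 1) mod N = (F + fam p e 1) mod N" using sk1 h1 by simp
  hence "(fam p e ^^ i) 1 = fam p e 1" by (rule mod_cancel_nat[OF lt1])
  hence "S ((fam p e ^^ i) 1) mod N = S (fam p e 1) mod N" by simp
  hence "(r^i * S 1) mod N = (r * S 1) mod N" using fam_pow[of 1 e i] fam_S[of 1 e] one N_def by simp
  hence ri: "r^i mod N = r mod N" using S_1 by simp
  have "(s^F * r^i) mod N = (s^F * r) mod N" by (rule mod_mult_cong[OF refl ri])
  moreover have "(s^F * r^i) mod N = (r * s^a) mod N" using key_exp[OF e1] N_def i_def by simp
  ultimately have rm: "(r * s^F) mod N = (r * s^a) mod N" by (simp add: mult.commute)
  have cr: "coprime r N" using r_coprime[of 1 e] N_def by simp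
  have "s^F mod N = s^a mod N" by (rule mod_mult_cancel_coprime[OF cr rm])
  hence "s^F mod p^e = s^a mod p^e" using N_def by simp
  hence "F mod p^(e-1) = a mod p^(e-1)" by (rule spow_inj[OF e1])
  hence FK: "F mod K = a mod K" using K_def by simp
  have "S F mod K = S (F mod K) mod K" using S_mod_ppow[of F "e-1"] K_def by simp
  also have "\<dots> = S (a mod K) mod K" using FK by simp
  also have "\<dots> = S a mod K" using S_mod_ppow[of a "e-1"] K_def by simp
  finally have "S F mod K = S a mod K" .
  moreover have "S F mod K = (r * S a) mod K"
  proof -
    have "S F mod N = (r * S a) mod N" using fam_S aN N_def F_def by simp
    have "S F mod K = S F mod N mod K" using Kd by (simp add: mod_mod_cancel)
    also have "\<dots> = (r * S a) mod N mod K" using \<open>S F mod N = (r * S a) mod N\<close> by simp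
    also have "\<dots> = (r * S a) mod K" using Kd by (simp add: mod_mod_cancel)
    finally show ?thesis .
  qed
  moreover have "r * S a = S a + (p - 2) * S a"
  proof -
    have "r = (p - 2) + 1" using p3 by simp
    hence "r * S a = ((p - 2) + 1) * S a" by simp
    thus ?thesis by (simp add: algebra_simps)
  qed
  ultimately have "(S a + (p - 2) * S a) mod K = S a mod K" by simp
  hence "K dvd (p - 2) * S a" by (rule add_mod_cancel0)
  moreover have "coprime K (p - 2)" using r2_coprime[of "e-1"] K_def by (simp add: coprime_commute)
  ultimately have "K dvd S a" using coprime_dvd_mult_right_iff by blast
  hence "K dvd a" using S_dvd_imp[of "e-1" a] K_def by simp
  moreover have "0 < a" using a_def p3 by simp
  ultimately have "K \<le> a" by (simp add: dvd_imp_le)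
  thus False using aK by simp
qed

end



lemma ord_one:
  assumes "skew_morphism 1 g"
  shows "skew_ord g = 1 \<and> g = id"
proof -
  have perm: "g permutes {0..<1}" and g0: "g 0 = 0" using assms unfolding skew_morphism_def by auto
  have gid: "g = id"
  proof
    fix x show "g x = id x" using perm g0 unfolding permutes_def by (cases "x = 0") auto
  qed
  have "skew_ord g > 0 \<and> g ^^ skew_ord g = id \<and> skew_ord g \<le> 1"
    by (rule ex_ord_basic) (use gid in auto)
  thus ?thesis using gid by auto
qed

definition sinv :: "nat \<times> (nat \<Rightarrow> nat) \<Rightarrow> bool" where
  "sinv X \<longleftrightarrow> skew_morphism (fst X) (snd X) \<and> 0 < fst X"

lemma inv_step: "sinv X \<Longrightarrow> sinv (deriv_step X)"
proof -
  assume "sinv X"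
  then interpret skm "fst X" "snd X" by unfold_locales (auto simp: sinv_def)
  show ?thesis unfolding sinv_def deriv_step_def using D_skew m_pos by simp
qed

lemma inv_iter: "sinv X \<Longrightarrow> sinv ((deriv_step ^^ c) X)"
  by (induction c) (auto intro: inv_step)

lemma one_step: "sinv X \<Longrightarrow> fst X = 1 \<Longrightarrow> fst (deriv_step X) = 1"
  using ord_one by (auto simp: sinv_def deriv_step_def)

lemma one_iter:
  assumes "sinv X" "fst ((deriv_step ^^ c) X) = 1" "c \<le> c'"
  shows "fst ((deriv_step ^^ c') X) = 1"
proof -
  have "fst ((deriv_step ^^ (c + d)) X) = 1" for d
  proof (induction d)
    case 0 thus ?case using assms by simp
  next
    case (Suc d)
    thus ?case using one_step inv_iter[OF assms(1)] by simp
  qed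
  from this[of "c' - c"] show ?thesis using assms by simp
qed

lemma two_step:
  "(deriv_step ^^ 2) (N, g) = (skew_ord (derived N g), derived (skew_ord g) (derived N g))"
  by (simp add: deriv_step_def numeral_2_eq_2)

lemma n2_lt:
  assumes sk: "skew_morphism N g" and N2: "2 \<le> N"
  shows "skew_ord (derived N g) < N \<and> skew_ord (derived N g) dvd N"
proof -
  interpret skm N g using sk N2 by unfold_locales auto
  have mN: "m < N" using orbit N2 by simp
  have "skew_ord D \<le> m"
  proof (cases "m = 1")
    case True
    thus ?thesis using ord_one D_skew by simp
  next
    case False
    hence m2: "2 \<le> m" using m_pos by simp
    interpret E: skm m D using D_skew m_pos by unfold_locales auto
    show ?thesis using E.orbit m2 by simp
  qed
  thus ?thesis using mN ord_D_dvd by simp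
qed

lemma UB:
  assumes p: "prime p"
  shows "skew_morphism (p^e) g \<Longrightarrow> fst ((deriv_step ^^ (2*e)) (p^e, g)) = 1"
proof (induction e arbitrary: g rule: less_induct)
  case (less e)
  show ?case
  proof (cases "e = 0")
    case True thus ?thesis by simp
  next
    case False
    define N where "N = p^e"
    have p2: "2 \<le> p" using p prime_ge_2_nat by blast
    have "p \<le> p^e" using p2 False by (intro self_le_power) auto
    hence N2: "2 \<le> N" using p2 N_def by simp
    have sk: "skew_morphism N g" using less.prems N_def by simp
    interpret skm N g using sk N2 by unfold_locales auto
    define n2 where "n2 = skew_ord D"
    define g2 where "g2 = derived m D"
    have n2: "n2 < N" "n2 dvd N" using n2_lt[OF sk N2] n2_def by auto
    obtain e' where e': "e' \<le> e" "n2 = p^e'" using n2(2) N_def divides_primepow_nat[OF p] by blast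
    have "e' < e"
    proof (rule ccontr)
      assume "\<not> e' < e" hence "e' = e" using e' by simp
      thus False using n2 e' N_def by simp
    qed
    interpret E: skm m D using D_skew m_pos by unfold_locales auto
    have sk2: "skew_morphism (p^e') g2" using E.D_skew e' n2_def g2_def by simp
    have IH: "fst ((deriv_step ^^ (2*e')) (p^e', g2)) = 1" using less.IH[OF \<open>e' < e\<close> sk2] .
    have inv2: "sinv (p^e', g2)" using sk2 p2 by (simp add: sinv_def)
    have "fst ((deriv_step ^^ (2*(e-1))) (p^e', g2)) = 1"
      using one_iter[OF inv2 IH] \<open>e' < e\<close> by simp
    moreover have "(deriv_step ^^ (2*e)) (p^e, g) = (deriv_step ^^ (2*(e-1))) ((deriv_step ^^ 2) (N, g))"
    proof -
      have "2*e = 2*(e-1) + 2" using False by simp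
      thus ?thesis using N_def by (simp only: funpow_add o_apply)
    qed
    moreover have "(deriv_step ^^ 2) (N, g) = (p^e', g2)" using two_step e' n2_def g2_def by simp
    ultimately show ?thesis by simp
  qed
qed

lemma complexity_eq:
  assumes inv: "sinv X" and c1: "2 \<le> fst ((deriv_step ^^ c) X)" and c2: "fst ((deriv_step ^^ Suc c) X) = 1"
  shows "complexity (fst X) (snd X) = c"
  unfolding complexity_def
proof (rule the_equality)
  show "2 \<le> fst ((deriv_step ^^ c) (fst X, snd X)) \<and> fst ((deriv_step ^^ Suc c) (fst X, snd X)) = 1"
    using c1 c2 by simp
next
  fix c' assume h: "2 \<le> fst ((deriv_step ^^ c') (fst X, snd X)) \<and> fst ((deriv_step ^^ Suc c') (fst X, snd X)) = 1"
  show "c' = c"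
  proof (rule ccontr)
    assume "c' \<noteq> c"
    hence "Suc c \<le> c' \<or> Suc c' \<le> c" by auto
    thus False
    proof
      assume "Suc c \<le> c'"
      hence "fst ((deriv_step ^^ c') X) = 1" using one_iter[OF inv c2] by blast
      thus False using h by simp
    next
      assume "Suc c' \<le> c"
      hence "fst ((deriv_step ^^ c) X) = 1" using one_iter[OF inv, of "Suc c'"] h by simp
      thus False using c1 by simp
    qed
  qed
qed

lemma (in oddp) step2:
  assumes j: "1 \<le> j"
  shows "(deriv_step ^^ 2) (p^(Suc j), fam p (Suc j)) = (p^j, fam p j)"
proof -
  define e where "e = Suc j"
  define N where "N = p^e"
  have e1: "1 \<le> e" and e2: "2 \<le> e" using j e_def by auto
  have pN: "p \<le> N" using e1 p3 N_def by (simp add: self_le_power)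
  have N2: "2 \<le> N" using pN p3 by simp
  have sk: "skew_morphism N (fam p e)" using fam_skew[OF e1] N_def by simp
  interpret skm N "fam p e" using sk N2 by unfold_locales auto
  define n2 where "n2 = skew_ord D"
  have n2: "n2 < N" "n2 dvd N" using n2_lt[OF sk N2] n2_def by auto
  obtain i where i: "i \<le> e" "n2 = p^i" using n2(2) N_def divides_primepow_nat[OF pp] by blast
  have "i \<noteq> e" using i n2 N_def by auto
  have "\<not> i < j"
  proof
    assume "i < j"
    hence "i \<le> e - 2" using e_def by simp
    hence dv: "n2 dvd p^(e-2)" using i by (simp add: le_imp_power_dvd)
    define a where "a = p^(e-2)"
    have aN: "a < N" unfolding a_def N_def by (rule power_strict_increasing) (use e1 p3 in auto)
    have "D ^^ a = D ^^ (a mod n2)" using gpow_mod[OF D_fin] n2_def by simp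
    also have "a mod n2 = 0" using dv a_def by simp
    finally have "D ^^ a = D ^^ 0" .
    hence Da: "D ^^ a = id" by (simp only: funpow.simps(1))
    have "P a mod m = 1 mod m" using pi_D[OF aN] Da by simp
    hence "fam p e ^^ P a = fam p e ^^ 1" using pow_mod by metis
    hence "\<forall>b<N. fam p e ((a + b) mod N) = (fam p e a + fam p e b) mod N"
      using pi_prop[OF aN] by simp
    thus False using fam_nonadd[OF e2] a_def N_def by simp
  qed
  hence ij: "i = j" using i \<open>i \<noteq> e\<close> e_def by simp
  have "derived m D = fam p j"
  proof
    fix x show "derived m D x = fam p j x"
    proof (cases "x < n2")
      case True
      have "derived m D x = fam p e x mod n2" using second_derived True n2_def by simp
      also have "\<dots> = fam p j x" using fam_compat[of x j] True i ij e_def by simp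
      finally show ?thesis .
    next
      case False
      thus ?thesis using i ij n2_def by (simp add: derived_def fam_out)
    qed
  qed
  thus ?thesis using two_step[of N "fam p e"] n2_def i ij N_def e_def by simp
qed

lemma (in oddp) chain:
  assumes j: "1 \<le> j"
  shows "(deriv_step ^^ (2*(j-1))) (p^j, fam p j) = (p, fam p 1)"
  using j
proof (induction j rule: dec_induct)
  case base thus ?case by simp
next
  case (step j)
  have "2 * (Suc j - 1) = 2 * (j - 1) + 2" using step.hyps by simp
  hence "(deriv_step ^^ (2 * (Suc j - 1))) (p^Suc j, fam p (Suc j))
      = (deriv_step ^^ (2 * (j - 1))) ((deriv_step ^^ 2) (p^Suc j, fam p (Suc j)))"
    by (simp only: funpow_add o_apply)
  also have "\<dots> = (deriv_step ^^ (2 * (j - 1))) (p^j, fam p j)" using step2 step.hyps by simp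
  finally show ?case using step.IH by simp
qed

theorem theorem6p2:
  fixes p e :: nat
  assumes "prime p" and "odd p" and "0 < e"
  shows "(\<forall>\<phi>. skew_morphism (p ^ e) \<phi> \<longrightarrow> complexity (p ^ e) \<phi> \<le> 2 * e - 1) \<and>
         (\<exists>\<phi>. skew_morphism (p ^ e) \<phi> \<and> complexity (p ^ e) \<phi> = 2 * e - 1)"
proof -
  interpret oddp p using assms by unfold_locales auto
  define N where "N = p^e"
  have pN: "p \<le> N" using assms p3 N_def by (simp add: self_le_power)
  have N3: "3 \<le> N" using pN p3 by simp
  have part1: "complexity N \<phi> \<le> 2 * e - 1" if sk: "skew_morphism N \<phi>" for \<phi>
  proof -
    define X where "X = (N, \<phi>)"
    have inv: "sinv X" using sk N3 X_def by (simp add: sinv_def)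
    have ub: "fst ((deriv_step ^^ (2*e)) X) = 1" using UB[OF assms(1)] sk X_def N_def by simp
    define c0 where "c0 = (LEAST c. fst ((deriv_step ^^ c) X) = 1)"
    have c0a: "fst ((deriv_step ^^ c0) X) = 1" unfolding c0_def by (rule LeastI[of _ "2*e"]) (rule ub)
    have c0b: "c0 \<le> 2*e" unfolding c0_def by (rule Least_le) (rule ub)
    have "c0 \<noteq> 0" using c0a N3 X_def by (cases "c0 = 0") auto
    then obtain c where c: "c0 = Suc c" by (cases c0) auto
    have "c < c0" using c by simp
    hence "fst ((deriv_step ^^ c) X) \<noteq> 1"
      using not_less_Least[of c "\<lambda>c. fst ((deriv_step ^^ c) X) = 1"] c0_def by simp
    moreover have "0 < fst ((deriv_step ^^ c) X)" using inv_iter[OF inv] by (simp add: sinv_def)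
    ultimately have "2 \<le> fst ((deriv_step ^^ c) X)" by simp
    hence "complexity (fst X) (snd X) = c" using complexity_eq[OF inv] c0a c by simp
    thus ?thesis using c c0b X_def by simp
  qed
  have part2: "skew_morphism N (fam p e) \<and> complexity N (fam p e) = 2 * e - 1"
  proof
    have e1: "1 \<le> e" using assms by simp
    show sk: "skew_morphism N (fam p e)" using fam_skew[OF e1] N_def by simp
    define X where "X = (N, fam p e)"
    have inv: "sinv X" using sk N3 X_def by (simp add: sinv_def)
    have ub: "fst ((deriv_step ^^ Suc (2*e - 1)) X) = 1"
      using UB[OF assms(1)] sk X_def N_def e1 by simp
    have "(deriv_step ^^ (2*e - 1)) X = deriv_step ((deriv_step ^^ (2*(e-1))) X)"
    proof -
      have "2*e - 1 = Suc (2*(e-1))" using e1 by simp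
      thus ?thesis by simp
    qed
    also have "(deriv_step ^^ (2*(e-1))) X = (p, fam p 1)" using chain[OF e1] X_def N_def by simp
    finally have eqX: "(deriv_step ^^ (2*e - 1)) X = deriv_step (p, fam p 1)" .
    have "fst (deriv_step (p, fam p 1)) = skew_ord (fam p 1)" by (simp add: deriv_step_def)
    hence "fst ((deriv_step ^^ (2*e - 1)) X) = skew_ord (fam p 1)" by (simp only: eqX)
    moreover have "2 \<le> skew_ord (fam p 1)"
    proof -
      have sk1: "skew_morphism p (fam p 1)" using fam_skew[of 1] by simp
      interpret F1: skm p "fam p 1" using sk1 p3 by unfold_locales auto
      have "fam p 1 \<noteq> id" using fam_nonid[of 1] by auto
      thus ?thesis using F1.m_ge2 by simp
    qed
    ultimately have "2 \<le> fst ((deriv_step ^^ (2*e - 1)) X)" by simp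
    thus "complexity N (fam p e) = 2 * e - 1" using complexity_eq[OF inv _ ub] X_def by simp
  qed
  show ?thesis using part1 part2 N_def by blast
qed


end
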